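(* For $n\in\{0,1,2,\dots\}$ define \[ b_n=\frac14\frac{(-1)^n}{n!}\sum_{k=0}^{n}(-1)^kS(n,k)(2k-1)!!, \] \[ c_n=\frac{(-1)^{n+1}}{n!}\sum_{k=1}^{n}(-1)^kS(n,k)\frac{k!}{2^k}\sum_{\ell=1}^{k}(-1)^{\ell}\binom{2k-\ell}{k}\frac{2^{\ell/2}}{\ell}\sin\frac{3\ell\pi}{4}. \] Then $\lim_{n\to\infty}b_n=+\infty$, $\lim_{n\to\infty}\frac{c_n}{b_n}=\pi$, and consequently $\lim_{n\to\infty}c_n=+\infty$.
   Context: $S(n,k)$ are the Stirling numbers of the second kind, given by $\frac{(e^x-1)^k}{k!}=\sum_{n\ge k}S(n,k)\frac{x^n}{n!}$. $(2k-1)!!=1\cdot3\cdots(2k-1)$ for $k\ge1$, and $(-1)!!=1$. These $b_n,c_n$ satisfy $W(z)=\sum_n(b_n\pi-c_n)z^n$ for $|z|<\ln2$, where $W(z)=\frac{\arctan\sqrt{2e^{-z}-1}}{\sqrt{2e^{-z}-1}}$ with principal branches. *)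

theory Defs
  imports "HOL-Analysis.Analysis" "HOL-Combinatorics.Stirling"
begin

text \<open>Odd double factorial: oddfact k = (2k-1)!! = 1*3*...*(2k-1), with oddfact 0 = (-1)!! = 1.\<close>
definition oddfact :: "nat \<Rightarrow> nat" where
  "oddfact k = (\<Prod>i<k. 2 * i + 1)"

definition b_seq :: "nat \<Rightarrow> real" where
  "b_seq n = (1/4) * ((-1) ^ n / fact n) *
     (\<Sum>k=0..n. (-1) ^ k * real (Stirling n k) * real (oddfact k))"

definition c_seq :: "nat \<Rightarrow> real" where
  "c_seq n = ((-1) ^ (n + 1) / fact n) *
     (\<Sum>k=1..n. (-1) ^ k * real (Stirling n k) * (fact k / 2 ^ k) *
        (\<Sum>l=1..k. (-1) ^ l * real ((2 * k - l) choose k) *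
           (2 powr (real l / 2) / real l) * sin (3 * real l * pi / 4)))"

end

theory Submission
  imports Defs "HOL-Complex_Analysis.Complex_Analysis"
begin

lemma Stirling_Suc_same: "Stirling (Suc n) n = (Suc n choose 2)"
  by (induction n) (auto simp: numeral_2_eq_2)

lemma Wpow_nth:
  fixes c :: "'a::field_char_0"
  shows "fps_nth ((fps_exp c - 1) ^ k) n = c ^ n * fact k * of_nat (Stirling n k) / fact n"
proof (induction k arbitrary: n)
  case 0
  then show ?case by (cases n) auto
next
  case (Suc k)
  define W where "W = fps_exp c - (1 :: 'a fps)"
  have dW: "fps_deriv W = fps_const c * (W + 1)" unfolding W_def by simp
  have IHk: "\<And>n. fps_nth (W ^ k) n = c ^ n * fact k * of_nat (Stirling n k) / fact n"
    using Suc.IH unfolding W_def by simp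
  show ?case unfolding W_def[symmetric]
  proof (induction n)
    case 0
    have "fps_nth W 0 = 0" unfolding W_def by simp
    then show ?case by (simp add: fps_nth_power_0 del: power_Suc)
  next
    case (Suc n)
    have "fps_deriv (W ^ Suc k) = fps_const (of_nat (Suc k)) * W ^ k * fps_deriv W"
      by (simp only: fps_deriv_power diff_Suc_1 mult.assoc) (simp add: algebra_simps)
    also have "\<dots> = fps_const (of_nat (Suc k) * c) * (W ^ Suc k + W ^ k)"
      by (simp add: dW algebra_simps)
    finally have D: "fps_deriv (W ^ Suc k) = fps_const (of_nat (Suc k) * c) * (W ^ Suc k + W ^ k)" .
    have "of_nat (Suc n) * fps_nth (W ^ Suc k) (Suc n) = fps_nth (fps_deriv (W ^ Suc k)) n"
      by (simp only: fps_deriv_nth) simp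
    also have "\<dots> = of_nat (Suc k) * c * (fps_nth (W ^ Suc k) n + fps_nth (W ^ k) n)"
      by (simp only: D fps_mult_left_const_nth fps_add_nth)
    finally have eq: "of_nat (Suc n) * fps_nth (W ^ Suc k) (Suc n) = of_nat (Suc k) * c * (fps_nth (W ^ Suc k) n + fps_nth (W ^ k) n)" .
    have "fps_nth (W ^ Suc k) (Suc n) = of_nat (Suc k) * c * (fps_nth (W ^ Suc k) n + fps_nth (W ^ k) n) / of_nat (Suc n)"
      using eq by (simp add: field_simps del: of_nat_Suc)
    also have "\<dots> = c ^ Suc n * fact (Suc k) * of_nat (Stirling (Suc n) (Suc k)) / fact (Suc n)"
      unfolding Suc.IH IHk
      by (simp add: field_simps del: of_nat_Suc) (simp add: algebra_simps)?
    finally show ?case .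
  qed
qed

lemma YZ:
  fixes V Um Hb :: "real fps"
  defines "V \<equiv> fps_exp 1 - 1" and "Um \<equiv> fps_exp (-1) - 1" and "Hb \<equiv> fps_binomial (-1/2 :: real)"
  shows "Hb oo (2 * Um) = (1 + V) * (Hb oo (- (V^2)))"
proof -
  define Y where "Y = Hb oo (2 * Um)"
  define Z where "Z = (1 + V) * (Hb oo (- (V^2)))"
  define w where "w = 1 + 2 * Um"
  have V0: "fps_nth V 0 = 0" and Um0: "fps_nth Um 0 = 0" unfolding V_def Um_def by simp_all
  have EE: "fps_exp (1::real) * fps_exp (-1) = 1"
    by (metis fps_exp_add_mult add.right_inverse fps_exp_0)
  have key: "w * (1 + V) = 1 - V"
  proof -
    have "w * (1 + V) = 2 * (fps_exp 1 * fps_exp (-1)) - fps_exp 1"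
      unfolding w_def Um_def V_def by (simp add: algebra_simps)
    also have "\<dots> = 1 - V" unfolding EE V_def by (simp add: algebra_simps)
    finally show ?thesis .
  qed
  have Hb2: "Hb ^ 2 = inverse (1 + fps_X)"
    unfolding Hb_def power2_eq_square
    by (simp flip: fps_binomial_add_mult fps_binomial_minus_one)
  have c1: "fps_nth (2 * Um) 0 = 0" using Um0 by simp
  have c2: "fps_nth (- (V^2)) 0 = 0" using V0 by (simp add: fps_nth_power_0)
  have "Y ^ 2 = Hb ^ 2 oo (2 * Um)"
    unfolding Y_def by (rule fps_compose_power[OF c1])
  also have "\<dots> = inverse ((1 + fps_X) oo (2 * Um))"
    unfolding Hb2 by (rule fps_inverse_compose[OF c1]) simp
  also have "(1 + fps_X) oo (2 * Um) = w"
    unfolding w_def using c1 by (simp add: fps_compose_add_distrib)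
  finally have Y2: "Y ^ 2 = inverse w" .
  have "Z ^ 2 = (1 + V) ^ 2 * (Hb ^ 2 oo (- (V^2)))"
    unfolding Z_def by (simp add: power_mult_distrib fps_compose_power[OF c2])
  also have "Hb ^ 2 oo (- (V^2)) = inverse ((1 + fps_X) oo (- (V^2)))"
    unfolding Hb2 by (rule fps_inverse_compose[OF c2]) simp
  also have "(1 + fps_X) oo (- (V^2)) = 1 - V^2"
    using c2 by (simp add: fps_compose_add_distrib)
  finally have Z2: "Z ^ 2 = (1 + V) ^ 2 * inverse (1 - V^2)" .
  have w0: "fps_nth w 0 \<noteq> 0" unfolding w_def using Um0 by simp
  have d0: "fps_nth (1 - V^2) 0 \<noteq> 0" using V0 by (simp add: fps_nth_power_0)
  have "Y ^ 2 * w = 1" unfolding Y2 using w0 by (rule inverse_mult_eq_1)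
  moreover have "Z ^ 2 * w = 1"
  proof -
    have "Z ^ 2 * w = (1 + V) * (w * (1 + V)) * inverse (1 - V^2)"
      unfolding Z2 by (simp add: algebra_simps power2_eq_square)
    also have "\<dots> = (1 - V^2) * inverse (1 - V^2)"
      unfolding key by (simp add: algebra_simps power2_eq_square)
    also have "\<dots> = 1" using d0 by (rule inverse_mult_eq_1')
    finally show ?thesis .
  qed
  ultimately have "Y ^ 2 * w = Z ^ 2 * w" by simp
  moreover have "w \<noteq> 0" using w0 by auto
  ultimately have YZ2: "Y ^ 2 = Z ^ 2" by simp
  have "(Y - Z) * (Y + Z) = 0" using YZ2 by (simp add: algebra_simps power2_eq_square)
  moreover have "Y + Z \<noteq> 0"
  proof -
    have "fps_nth (Y + Z) 0 = 2" unfolding Y_def Z_def Hb_def using V0 by simp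
    thus ?thesis by (metis fps_zero_nth zero_neq_numeral)
  qed
  ultimately have "Y = Z" by simp
  thus ?thesis unfolding Y_def Z_def .
qed

lemma oddfact_gbin: "fact k * ((-1/2 :: real) gchoose k) * 2 ^ k = (-1) ^ k * real (oddfact k)"
proof -
  have "(\<Prod>i = 0..<k. (-1/2 :: real) - of_nat i) * 2 ^ k = (-1) ^ k * real (oddfact k)"
    unfolding oddfact_def
    by (induction k) (auto simp: prod.atLeast0_lessThan_Suc lessThan_Suc algebra_simps)
  thus ?thesis by (simp add: gbinomial_mult_fact)
qed

lemma b_fps:
  "b_seq n = fps_nth (fps_binomial (-1/2 :: real) oo (2 * (fps_exp (-1) - 1))) n / 4"
proof -
  have "fps_nth (fps_binomial (-1/2 :: real) oo (2 * (fps_exp (-1) - 1))) n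
     = (\<Sum>k=0..n. ((-1/2 :: real) gchoose k) * (2 ^ k * ((-1) ^ n * fact k * real (Stirling n k) / fact n)))"
    unfolding fps_compose_nth
    by (intro sum.cong refl) (simp add: power_mult_distrib Wpow_nth fps_numeral_fps_const fps_const_power)
  also have "\<dots> = ((-1) ^ n / fact n) * (\<Sum>k=0..n. (-1) ^ k * real (Stirling n k) * real (oddfact k))"
    unfolding sum_distrib_left
  proof (intro sum.cong refl)
    fix k assume "k \<in> {0..n}"
    have "((-1/2 :: real) gchoose k) * (2 ^ k * ((-1) ^ n * fact k * real (Stirling n k) / fact n))
       = (fact k * ((-1/2 :: real) gchoose k) * 2 ^ k) * ((-1) ^ n * real (Stirling n k) / fact n)"
      by (simp add: field_simps)
    also have "\<dots> = (-1) ^ n / fact n * ((-1) ^ k * real (Stirling n k) * real (oddfact k))"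
      unfolding oddfact_gbin by (simp add: field_simps)
    finally show "((-1/2 :: real) gchoose k) * (2 ^ k * ((-1) ^ n * fact k * real (Stirling n k) / fact n))
       = (-1) ^ n / fact n * ((-1) ^ k * real (Stirling n k) * real (oddfact k))" .
  qed
  finally show ?thesis unfolding b_seq_def by simp
qed

definition gam :: "nat \<Rightarrow> real" where "gam i = pochhammer (1/2) i / fact i"

lemma gam_nonneg: "gam i \<ge> 0"
  unfolding gam_def by (intro divide_nonneg_pos pochhammer_nonneg) auto

lemma gam_Suc: "gam (Suc i) = gam i * (2 * real i + 1) / (2 * real i + 2)"
  unfolding gam_def by (simp add: pochhammer_Suc field_simps)

lemma gam_sq: "i \<ge> 1 \<Longrightarrow> gam i ^ 2 \<ge> 1 / (4 * real i)"
proof (induction i rule: dec_induct)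
  case base
  then show ?case by (simp add: gam_def power2_eq_square)
next
  case (step i)
  have "gam (Suc i) ^ 2 = gam i ^ 2 * ((2 * real i + 1) / (2 * real i + 2)) ^ 2"
    by (simp add: gam_Suc power_mult_distrib power_divide)
  also have "\<dots> \<ge> 1 / (4 * real i) * ((2 * real i + 1) / (2 * real i + 2)) ^ 2"
    using step by (intro mult_right_mono) auto
  also have "1 / (4 * real i) * ((2 * real i + 1) / (2 * real i + 2)) ^ 2 \<ge> 1 / (4 * real (Suc i))"
  proof -
    have pos: "real i > 0" using step(1) by simp
    have "1 / (4 * real (Suc i)) * (4 * real i * (2 * real i + 2) ^ 2) \<le> (2 * real i + 1) ^ 2"
      using pos by (simp add: field_simps power2_eq_square)
    thus ?thesis using pos by (simp add: field_simps)
  qed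
  finally show ?case .
qed

definition Vf :: "real fps" where "Vf = fps_exp 1 - 1"

definition Cf :: "real fps" where "Cf = fps_binomial (-1/2 :: real) oo (- (Vf^2))"

lemma V_nth_pow: "fps_nth (Vf ^ k) n = fact k * real (Stirling n k) / fact n"
  unfolding Vf_def by (simp add: Wpow_nth)

lemma neg_pow_fps: "(- (F::real fps)) ^ i = fps_const ((-1) ^ i) * F ^ i"
  by (induction i) (simp_all add: algebra_simps fps_const_neg[symmetric] del: fps_const_neg)

lemma Cf_nth: "fps_nth Cf m = (\<Sum>i=0..m. gam i * fps_nth (Vf ^ (2*i)) m)"
  unfolding Cf_def fps_compose_nth
proof (intro sum.cong refl)
  fix i
  have "(- (Vf^2)) ^ i = fps_const ((-1) ^ i) * Vf ^ (2 * i)"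
    unfolding power_mult neg_pow_fps ..
  hence "fps_nth ((- (Vf^2)) ^ i) m = (-1) ^ i * fps_nth (Vf ^ (2 * i)) m" by simp
  thus "fps_nth (fps_binomial (- 1 / 2)) i * fps_nth ((- (Vf\<^sup>2)) ^ i) m = gam i * fps_nth (Vf ^ (2 * i)) m"
    by (simp add: gam_def gbinomial_pochhammer)
qed

lemma Cf_nonneg: "fps_nth Cf m \<ge> 0"
  unfolding Cf_nth V_nth_pow by (intro sum_nonneg mult_nonneg_nonneg gam_nonneg) auto

lemma Cf_low: "fps_nth Cf (Suc (2*i)) \<ge> gam i * real i"
proof -
  have "gam i * fps_nth (Vf ^ (2*i)) (Suc (2*i)) \<le> fps_nth Cf (Suc (2*i))"
    unfolding Cf_nth
    by (rule member_le_sum[where f = "\<lambda>j. gam j * fps_nth (Vf ^ (2*j)) (Suc (2*i))"])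
       (auto simp: V_nth_pow intro!: divide_nonneg_nonneg mult_nonneg_nonneg gam_nonneg)
  moreover have "fps_nth (Vf ^ (2*i)) (Suc (2*i)) = real i"
  proof -
    have "real (Suc (2*i) choose 2) = real (Suc (2*i)) * real i"
      by (simp add: choose_two) (simp add: algebra_simps)
    moreover have "(fact (Suc (2*i)) :: real) = real (Suc (2*i)) * fact (2*i)" by simp
    moreover have "(fact (2*i) :: real) > 0" by simp
    ultimately show ?thesis unfolding V_nth_pow Stirling_Suc_same
      by (simp del: of_nat_Suc fact_Suc)
  qed
  ultimately show ?thesis by simp
qed

lemma Vf_nth: "fps_nth Vf j = (if j = 0 then 0 else 1 / fact j)"
  unfolding Vf_def by simp

lemma Z_low:
  assumes "n \<ge> 1"
  shows "fps_nth ((1 + Vf) * Cf) n \<ge> fps_nth Cf n + fps_nth Cf (n - 1)"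
proof -
  have "fps_nth (Vf * Cf) n = (\<Sum>j=0..n. fps_nth Vf j * fps_nth Cf (n - j))"
    by (simp add: fps_mult_nth)
  also have "\<dots> \<ge> fps_nth Vf 1 * fps_nth Cf (n - 1)"
    using assms
    by (intro member_le_sum[where f = "\<lambda>j. fps_nth Vf j * fps_nth Cf (n - j)"])
       (auto simp: Vf_nth intro!: divide_nonneg_nonneg Cf_nonneg)
  finally have "fps_nth (Vf * Cf) n \<ge> fps_nth Cf (n - 1)" by (simp add: Vf_nth)
  thus ?thesis by (simp add: algebra_simps)
qed

lemma b_low:
  assumes "n \<ge> 1"
  shows "b_seq n \<ge> gam ((n - 1) div 2) * real ((n - 1) div 2) / 4"
proof -
  define i where "i = (n - 1) div 2"
  have bZ: "b_seq n = fps_nth ((1 + Vf) * Cf) n / 4"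
    unfolding b_fps YZ Cf_def Vf_def ..
  have "fps_nth Cf (Suc (2*i)) \<le> fps_nth Cf n + fps_nth Cf (n - 1)"
  proof (cases "even n")
    case True
    hence "n - 1 = Suc (2*i)" using assms unfolding i_def by presburger
    thus ?thesis using Cf_nonneg[of n] by simp
  next
    case False
    hence "n = Suc (2*i)" using assms unfolding i_def by presburger
    thus ?thesis using Cf_nonneg[of "n-1"] by simp
  qed
  with Cf_low[of i] Z_low[OF assms] show ?thesis unfolding bZ i_def[symmetric] by linarith
qed

lemma b_tendsto: "filterlim b_seq at_top sequentially"
  unfolding filterlim_at_top
proof
  fix Z :: real
  define M where "M = nat \<lceil>64 * Z^2\<rceil> + 1"
  show "eventually (\<lambda>n. Z \<le> b_seq n) sequentially"
    unfolding eventually_sequentially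
  proof (intro exI allI impI)
    fix n assume n: "2*M+1 \<le> n"
    define i where "i = (n-1) div 2"
    have iM: "M \<le> i" using n unfolding i_def by linarith
    have i1: "i \<ge> 1" using iM M_def by auto
    have "real M \<ge> 64 * Z^2" unfolding M_def by linarith
    hence iZ: "real i \<ge> 64 * Z^2" using iM by linarith
    have g: "gam i ^ 2 \<ge> 1 / (4 * real i)" using gam_sq[OF i1] .
    have ipos: "real i > 0" using i1 by simp
    have "(gam i * real i) ^ 2 = gam i ^ 2 * real i ^ 2" by (simp add: power_mult_distrib)
    also have "\<dots> \<ge> 1 / (4 * real i) * real i ^ 2" using g by (intro mult_right_mono) auto
    also have "1 / (4 * real i) * real i ^ 2 = real i / 4" using ipos by (simp add: power2_eq_square)
    finally have "(gam i * real i) ^ 2 \<ge> (4 * Z) ^ 2" using iZ by (simp add: power_mult_distrib)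
    hence "4 * Z \<le> gam i * real i"
      by (rule power2_le_imp_le) (use gam_nonneg[of i] in simp)
    moreover have "b_seq n \<ge> gam i * real i / 4" using b_low[of n] n unfolding i_def by simp
    ultimately show "Z \<le> b_seq n" by simp
  qed
qed

lemma gstep:
  fixes b :: "'a::comm_ring_1"
  shows "(1 - b) * (\<Sum>j\<le>Suc k. of_nat (Suc k + j choose j) * b ^ j)
       = (\<Sum>j\<le>k. of_nat (k + j choose j) * b ^ j) + of_nat (Suc (k+k) choose k) * b ^ Suc k * (1 - 2 * b)"
proof -
  define G where "G = (\<Sum>j\<le>Suc k. of_nat (Suc k + j choose j) * b ^ j)"
  define g where "g = (\<Sum>j\<le>k. of_nat (k + j choose j) * b ^ j)"
  define Z where "Z = (Suc (k+k) choose k)"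
  have pas: "of_nat (Suc k + j choose j) = (of_nat (k + j choose j) :: 'a) + (if j = 0 then 0 else of_nat (k + j choose (j - 1)))" for j
    by (cases j) (simp_all add: add_Suc_right)
  have X: "(Suc (k+k) choose Suc k) = Z"
    unfolding Z_def using binomial_symmetric[of "Suc k" "Suc (k+k)"] by simp
  have Y: "(Suc (Suc (k+k)) choose Suc k) = 2 * Z"
    using binomial_Suc_Suc[of "Suc (k+k)" k] X unfolding Z_def by simp
  have "G = (\<Sum>j\<le>Suc k. of_nat (k + j choose j) * b ^ j) + (\<Sum>j\<le>Suc k. (if j = 0 then 0 else of_nat (k + j choose (j - 1))) * b ^ j)"
    unfolding G_def pas by (simp add: algebra_simps sum.distrib)
  also have "(\<Sum>j\<le>Suc k. of_nat (k + j choose j) * b ^ j) = g + of_nat (Suc (k+k) choose Suc k) * b ^ Suc k"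
    unfolding g_def by (simp del: binomial_Suc_Suc)
  also have "(\<Sum>j\<le>Suc k. (if j = 0 then 0 else of_nat (k + j choose (j - 1))) * b ^ j)
      = (\<Sum>j\<le>k. of_nat (Suc k + j choose j) * b ^ Suc j)"
    by (subst sum.atMost_Suc_shift) (simp add: add_Suc_right del: binomial_Suc_Suc)
  also have "\<dots> = b * (G - of_nat (Suc (Suc (k+k)) choose Suc k) * b ^ Suc k)"
    unfolding G_def by (simp add: sum_distrib_left algebra_simps del: binomial_Suc_Suc)
  finally have "G = g + of_nat (Suc (k+k) choose Suc k) * b ^ Suc k + b * (G - of_nat (Suc (Suc (k+k)) choose Suc k) * b ^ Suc k)" .
  hence "G = g + of_nat Z * b ^ Suc k + b * (G - of_nat (2 * Z) * b ^ Suc k)"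
    by (simp only: X Y)
  hence "(1 - b) * G = g + of_nat Z * b ^ Suc k * (1 - 2 * b)"
    by (simp add: algebra_simps)
  thus ?thesis unfolding G_def g_def Z_def .
qed

lemma fk_step:
  fixes a b :: "'a::comm_ring_1"
  assumes "a + b = 1"
  shows "(\<Sum>j\<le>Suc k. of_nat (Suc k + j choose j) * (a ^ Suc (Suc k) * b ^ j))
       = (\<Sum>j\<le>k. of_nat (k + j choose j) * (a ^ Suc k * b ^ j)) + of_nat (Suc (k+k) choose k) * (a*b) ^ Suc k * (a - b)"
proof -
  define G where "G = (\<Sum>j\<le>Suc k. of_nat (Suc k + j choose j) * b ^ j)"
  define g where "g = (\<Sum>j\<le>k. of_nat (k + j choose j) * b ^ j)"
  define Z where "Z = (Suc (k+k) choose k)"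
  have gs: "(1 - b) * G = g + of_nat Z * b ^ Suc k * (1 - 2 * b)"
    unfolding G_def g_def Z_def by (rule gstep)
  have a: "a = 1 - b" using assms by (simp add: algebra_simps)
  have "(\<Sum>j\<le>Suc k. of_nat (Suc k + j choose j) * (a ^ Suc (Suc k) * b ^ j)) = a ^ Suc k * (a * G)"
    unfolding G_def by (simp add: sum_distrib_left algebra_simps)
  also have "a * G = g + of_nat Z * b ^ Suc k * (a - b)"
  proof -
    have "1 - 2 * b = a - b" using a by simp
    thus ?thesis using gs a by simp
  qed
  also have "a ^ Suc k * (g + of_nat Z * b ^ Suc k * (a - b)) = a ^ Suc k * g + of_nat Z * (a*b) ^ Suc k * (a - b)"
    by (simp add: power_mult_distrib algebra_simps)
  also have "a ^ Suc k * g = (\<Sum>j\<le>k. of_nat (k + j choose j) * (a ^ Suc k * b ^ j))"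
    unfolding g_def by (simp add: sum_distrib_left algebra_simps)
  finally show ?thesis unfolding Z_def .
qed

lemma prob_identity:
  fixes a b :: "'a::comm_ring_1"
  assumes "a + b = 1"
  shows "(\<Sum>j\<le>k. of_nat (k + j choose j) * (a ^ Suc k * b ^ j + b ^ Suc k * a ^ j)) = 1"
proof (induction k)
  case 0
  then show ?case using assms by simp
next
  case (Suc k)
  have ba: "b + a = 1" using assms by (simp add: add.commute)
  have "(\<Sum>j\<le>Suc k. of_nat (Suc k + j choose j) * (a ^ Suc (Suc k) * b ^ j + b ^ Suc (Suc k) * a ^ j))
     = (\<Sum>j\<le>Suc k. of_nat (Suc k + j choose j) * (a ^ Suc (Suc k) * b ^ j)) + (\<Sum>j\<le>Suc k. of_nat (Suc k + j choose j) * (b ^ Suc (Suc k) * a ^ j))"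
    by (simp only: distrib_left sum.distrib)
  also have "\<dots> = (\<Sum>j\<le>k. of_nat (k + j choose j) * (a ^ Suc k * b ^ j)) + (\<Sum>j\<le>k. of_nat (k + j choose j) * (b ^ Suc k * a ^ j))"
    unfolding fk_step[OF assms] fk_step[OF ba] by (simp add: algebra_simps)
  also have "\<dots> = 1" using Suc.IH by (simp only: distrib_left sum.distrib)
  finally show ?case .
qed

lemma cis_plus_neg: "cis x + cis (-x) = complex_of_real (2 * cos x)"
  by (simp add: complex_eq_iff)

lemma trig_id_j:
  fixes t :: real
  assumes "cos t \<noteq> 0"
  shows "(\<Sum>j\<le>k. real (k + j choose j) * (2 * cos (real (Suc (k - j)) * t)) / (2 * cos t) ^ (Suc k + j)) = 1"
proof -
  define c where "c = 2 * cos t"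
  have c0: "c \<noteq> 0" using assms unfolding c_def by simp
  define a where "a = cis t / complex_of_real c"
  define b where "b = cis (-t) / complex_of_real c"
  have ab: "a + b = 1" unfolding a_def b_def using c0
    by (simp add: add_divide_distrib[symmetric] cis_plus_neg c_def)
  have termeq: "a ^ Suc k * b ^ j + b ^ Suc k * a ^ j = complex_of_real (2 * cos (real (Suc (k - j)) * t) / c ^ (Suc k + j))"
    if "j \<le> k" for j
  proof -
    have e1: "real (Suc k) * t + real j * - t = real (Suc (k - j)) * t"
      using that by (simp add: of_nat_diff algebra_simps)
    have e2: "real j * t + real (Suc k) * - t = - (real (Suc (k - j)) * t)"
      using that by (simp add: of_nat_diff algebra_simps)
    have "a ^ Suc k * b ^ j = (cis t ^ Suc k * cis (-t) ^ j) / complex_of_real c ^ (Suc k + j)"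
      unfolding a_def b_def by (simp only: power_divide power_add times_divide_times_eq)
    also have "cis t ^ Suc k * cis (-t) ^ j = cis (real (Suc (k - j)) * t)"
      unfolding Complex.DeMoivre cis_mult e1 ..
    finally have 1: "a ^ Suc k * b ^ j = cis (real (Suc (k - j)) * t) / complex_of_real c ^ (Suc k + j)" .
    have "b ^ Suc k * a ^ j = (cis t ^ j * cis (-t) ^ Suc k) / complex_of_real c ^ (Suc k + j)"
      unfolding a_def b_def by (simp only: power_divide power_add times_divide_times_eq mult.commute add.commute)
    also have "cis t ^ j * cis (-t) ^ Suc k = cis (- (real (Suc (k - j)) * t))"
      unfolding Complex.DeMoivre cis_mult e2 ..
    finally have 2: "b ^ Suc k * a ^ j = cis (- (real (Suc (k - j)) * t)) / complex_of_real c ^ (Suc k + j)" .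
    show ?thesis unfolding 1 2
      by (simp add: add_divide_distrib[symmetric] cis_plus_neg)
  qed
  have "complex_of_real (\<Sum>j\<le>k. real (k + j choose j) * (2 * cos (real (Suc (k - j)) * t)) / c ^ (Suc k + j))
      = (\<Sum>j\<le>k. of_nat (k + j choose j) * (a ^ Suc k * b ^ j + b ^ Suc k * a ^ j))"
    unfolding of_real_sum
  proof (intro sum.cong refl)
    fix j assume "j \<in> {..k}"
    hence j: "j \<le> k" by simp
    show "complex_of_real (real (k + j choose j) * (2 * cos (real (Suc (k - j)) * t)) / c ^ (Suc k + j))
        = of_nat (k + j choose j) * (a ^ Suc k * b ^ j + b ^ Suc k * a ^ j)"
      unfolding termeq[OF j] by simp
  qed
  also have "\<dots> = 1" by (rule prob_identity[OF ab])
  finally have "(\<Sum>j\<le>k. real (k + j choose j) * (2 * cos (real (Suc (k - j)) * t)) / c ^ (Suc k + j)) = 1"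
    by (simp only: of_real_eq_1_iff)
  thus ?thesis unfolding c_def .
qed

lemma trig_id:
  fixes t :: real
  assumes "cos t \<noteq> 0"
  shows "(\<Sum>l\<le>k. real (2*k - l choose k) * (2 * cos (real (Suc l) * t)) * (2 * cos t) ^ l) = (2 * cos t) ^ Suc (2*k)"
proof -
  define c where "c = 2 * cos t"
  have c0: "c \<noteq> 0" using assms unfolding c_def by simp
  have "(\<Sum>l\<le>k. real (2*k - l choose k) * (2 * cos (real (Suc l) * t)) * c ^ l)
      = (\<Sum>j\<le>k. real (k + j choose j) * (2 * cos (real (Suc (k - j)) * t)) * c ^ (k - j))"
  proof -
    have "(\<Sum>l\<le>k. real (2*k - l choose k) * (2 * cos (real (Suc l) * t)) * c ^ l)
        = (\<Sum>j<Suc k. real (2*k - (Suc k - Suc j) choose k) * (2 * cos (real (Suc (Suc k - Suc j)) * t)) * c ^ (Suc k - Suc j))"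
      unfolding atMost_atLeast0 by (subst sum.nat_diff_reindex) (simp add: lessThan_Suc_atMost atLeast0AtMost)
    also have "\<dots> = (\<Sum>j\<le>k. real (k + j choose j) * (2 * cos (real (Suc (k - j)) * t)) * c ^ (k - j))"
      unfolding lessThan_Suc_atMost
    proof (intro sum.cong refl)
      fix j assume "j \<in> {..k}"
      hence j: "j \<le> k" by simp
      have "2*k - (Suc k - Suc j) = k + j" using j by simp
      moreover have "(k + j choose k) = (k + j choose j)"
        using binomial_symmetric[of j "k+j"] by simp
      moreover have "Suc (Suc k - Suc j) = Suc (k - j)" using j by simp
      moreover have "Suc k - Suc j = k - j" by simp
      ultimately show "real (2*k - (Suc k - Suc j) choose k) * (2 * cos (real (Suc (Suc k - Suc j)) * t)) * c ^ (Suc k - Suc j)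
          = real (k + j choose j) * (2 * cos (real (Suc (k - j)) * t)) * c ^ (k - j)"
        by simp
    qed
    finally show ?thesis .
  qed
  also have "\<dots> = c ^ Suc (2*k) * (\<Sum>j\<le>k. real (k + j choose j) * (2 * cos (real (Suc (k - j)) * t)) / c ^ (Suc k + j))"
    unfolding sum_distrib_left
  proof (intro sum.cong refl)
    fix j assume "j \<in> {..k}"
    hence j: "j \<le> k" by simp
    have "c ^ Suc (2*k) = c ^ (k - j) * c ^ (Suc k + j)"
      unfolding power_add[symmetric] using j by (simp add: algebra_simps mult_2 mult_2_right)
    thus "real (k + j choose j) * (2 * cos (real (Suc (k - j)) * t)) * c ^ (k - j)
        = c ^ Suc (2*k) * (real (k + j choose j) * (2 * cos (real (Suc (k - j)) * t)) / c ^ (Suc k + j))"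
      using c0 by (simp add: field_simps)
  qed
  also have "\<dots> = c ^ Suc (2*k)" using trig_id_j[OF assms] unfolding c_def by simp
  finally show ?thesis unfolding c_def .
qed

definition Apap :: "nat \<Rightarrow> real" where
  "Apap k = (\<Sum>l=1..k. (-1) ^ l * real ((2 * k - l) choose k) *
           (2 powr (real l / 2) / real l) * sin (3 * real l * pi / 4))"

definition Phi :: "nat \<Rightarrow> real \<Rightarrow> real" where
  "Phi k t = real (2*k choose k) * t + (\<Sum>l=1..k. real (2*k - l choose k) * ((2 * cos t) ^ l * sin (real l * t) / real l))"

lemma dterm:
  assumes "l \<ge> 1"
  shows "((\<lambda>t. (2 * cos t) ^ l * sin (real l * t) / real l) has_real_derivative
           (2 * (2 * cos x) ^ (l - 1) * cos (real (Suc l) * x))) (at x)"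
proof -
  have l0: "real l \<noteq> 0" using assms by simp
  have p: "(2 * cos x) ^ l = (2 * cos x) ^ (l - Suc 0) * (2 * cos x)"
    using assms by (cases l) auto
  have c: "cos (real (Suc l) * x) = cos (real l * x) * cos x - sin (real l * x) * sin x"
    by (simp add: distrib_right cos_add)
  show ?thesis
    apply (rule derivative_eq_intros refl)+
    subgoal using l0 .
    subgoal unfolding p c using l0 by (simp add: field_simps)
    done
qed

lemma Phi_deriv:
  assumes "cos x \<noteq> 0"
  shows "(Phi k has_real_derivative (2 * cos x) ^ (2*k)) (at x)"
proof -
  have "(Phi k has_real_derivative real (2*k choose k) * 1 + (\<Sum>l=1..k. real (2*k - l choose k) * (2 * (2 * cos x) ^ (l - 1) * cos (real (Suc l) * x)))) (at x)"
    unfolding Phi_def[abs_def]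
    by (intro derivative_intros DERIV_cmult dterm) auto
  also have "real (2*k choose k) * 1 + (\<Sum>l=1..k. real (2*k - l choose k) * (2 * (2 * cos x) ^ (l - 1) * cos (real (Suc l) * x)))
      = (2 * cos x) ^ (2*k)"
  proof -
    define c where "c = 2 * cos x"
    have c0: "c \<noteq> 0" using assms unfolding c_def by simp
    have "c * (real (2*k choose k) * 1 + (\<Sum>l=1..k. real (2*k - l choose k) * (2 * c ^ (l - 1) * cos (real (Suc l) * x))))
        = (\<Sum>l\<le>k. real (2*k - l choose k) * (2 * cos (real (Suc l) * x)) * c ^ l)"
    proof -
      have "(\<Sum>l\<le>k. real (2*k - l choose k) * (2 * cos (real (Suc l) * x)) * c ^ l)
          = real (2*k choose k) * (2 * cos x) + (\<Sum>l=1..k. real (2*k - l choose k) * (2 * cos (real (Suc l) * x)) * c ^ l)"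
        by (simp add: atMost_atLeast0 sum.atLeast_Suc_atMost)
      also have "(\<Sum>l=1..k. real (2*k - l choose k) * (2 * cos (real (Suc l) * x)) * c ^ l)
          = c * (\<Sum>l=1..k. real (2*k - l choose k) * (2 * c ^ (l - 1) * cos (real (Suc l) * x)))"
        unfolding sum_distrib_left
      proof (intro sum.cong refl)
        fix l assume "l \<in> {1..k}"
        hence "c ^ l = c * c ^ (l - 1)" by (cases l) auto
        thus "real (2*k - l choose k) * (2 * cos (real (Suc l) * x)) * c ^ l
            = c * (real (2*k - l choose k) * (2 * c ^ (l - 1) * cos (real (Suc l) * x)))" by simp
      qed
      finally show ?thesis unfolding c_def by (simp add: algebra_simps)
    qed
    also have "\<dots> = c ^ Suc (2*k)" unfolding c_def by (rule trig_id[OF assms])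
    finally have "c * (real (2*k choose k) * 1 + (\<Sum>l=1..k. real (2*k - l choose k) * (2 * c ^ (l - 1) * cos (real (Suc l) * x)))) = c * c ^ (2*k)"
      by simp
    thus ?thesis using c0 unfolding c_def by simp
  qed
  finally show ?thesis .
qed

lemma Apap_alt: "Apap k = - (\<Sum>l=1..k. real (2*k - l choose k) * (sqrt 2 ^ l * sin (real l * (pi/4)) / real l))"
  unfolding Apap_def sum_negf[symmetric]
proof (intro sum.cong refl)
  fix l assume "l \<in> {1..k}"
  have pw: "2 powr (real l / 2) = sqrt 2 ^ l"
  proof -
    have "sqrt 2 ^ l = (2 powr (1/2)) ^ l" by (simp add: powr_half_sqrt)
    also have "\<dots> = (2 powr (1/2)) powr (real l)" by (simp add: powr_realpow)
    also have "\<dots> = 2 powr (real l / 2)" by (simp add: powr_powr)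
    finally show ?thesis by simp
  qed
  have s: "sin (3 * real l * pi / 4) = - ((-1) ^ l * sin (real l * (pi/4)))"
  proof -
    have e: "3 * real l * pi / 4 = real l * pi - real l * (pi/4)" by (simp add: field_simps)
    show ?thesis unfolding e sin_diff sin_npi cos_npi by simp
  qed
  show "(-1) ^ l * real ((2 * k - l) choose k) * (2 powr (real l / 2) / real l) * sin (3 * real l * pi / 4)
      = - (real (2*k - l choose k) * (sqrt 2 ^ l * sin (real l * (pi/4)) / real l))"
    unfolding pw s by (simp add: field_simps)
qed

lemma J_int: "((\<lambda>t. (2 * cos t) ^ (2*k)) has_integral (real (2*k choose k) * pi / 4 + Apap k)) {pi/4..pi/2}"
proof -
  have "((\<lambda>t. (2 * cos t) ^ (2*k)) has_integral (Phi k (pi/2) - Phi k (pi/4))) {pi/4..pi/2}"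
  proof (rule fundamental_theorem_of_calculus_interior)
    show "pi/4 \<le> pi/2" by simp
    show "continuous_on {pi/4..pi/2} (Phi k)"
      unfolding Phi_def[abs_def] by (auto intro!: continuous_intros)
    fix x assume x: "x \<in> {pi/4<..<pi/2}"
    have "cos x > 0" using x by (intro cos_gt_zero_pi) auto
    thus "(Phi k has_vector_derivative (2 * cos x) ^ (2*k)) (at x)"
      using Phi_deriv[of x k] by (simp add: has_real_derivative_iff_has_vector_derivative)
  qed
  moreover have "Phi k (pi/2) = real (2*k choose k) * (pi/2)"
    unfolding Phi_def by (simp; intro sum.neutral; auto)
  moreover have "Phi k (pi/4) = real (2*k choose k) * (pi/4) - Apap k"
    unfolding Phi_def Apap_alt by (simp add: cos_45)
  ultimately show ?thesis by (simp add: field_simps)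
qed

lemma neg_pow_fps_gen: "(- (F::'a::comm_ring_1 fps)) ^ i = fps_const ((-1) ^ i) * F ^ i"
  by (induction i) (simp_all add: algebra_simps fps_const_neg[symmetric] del: fps_const_neg)

lemma den_lower:
  fixes q :: real and z :: complex
  assumes "0 \<le> q" "q \<le> 1" "norm z \<le> 1"
  shows "Re (1 - complex_of_real q * (1 - exp (- z))) \<ge> 1/6"
proof -
  have r: "\<bar>Re z\<bar> \<le> 1" and i: "\<bar>Im z\<bar> \<le> 1"
    using abs_Re_le_cmod[of z] abs_Im_le_cmod[of z] assms(3) by linarith+
  have e1: "exp (- Re z) \<ge> 1/3"
  proof -
    have "exp (- Re z) \<ge> exp (-1)" using r by simp
    moreover have "exp (-1 :: real) = 1 / exp 1" by (simp add: exp_minus field_simps)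
    moreover have "1 / exp 1 \<ge> (1/3 :: real)" using exp_le by (simp add: field_simps)
    ultimately show ?thesis by linarith
  qed
  have c1: "cos (Im z) \<ge> 1/2"
  proof -
    have "cos (Im z) = cos \<bar>Im z\<bar>" by simp
    also have "\<dots> \<ge> cos (pi/3)"
      using i pi_gt3 by (intro cos_monotone_0_pi_le) auto
    finally show ?thesis by (simp add: cos_60)
  qed
  have "Re (exp (- z)) = exp (- Re z) * cos (Im z)" by (simp add: Re_exp)
  also have "\<dots> \<ge> 1/3 * (1/2)" using e1 c1 by (intro mult_mono) auto
  finally have ez: "Re (exp (- z)) \<ge> 1/6" by simp
  have "Re (1 - complex_of_real q * (1 - exp (- z))) = 1 - q + q * Re (exp (- z))"
    by (simp add: algebra_simps)
  also have "\<dots> \<ge> 1 - q + q * (1/6)" using ez assms(1) by (intro add_left_mono mult_left_mono) auto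
  finally show ?thesis using assms(2) by linarith
qed

lemma E_bound:
  fixes q :: real
  assumes q: "0 \<le> q" "q \<le> 1"
  shows "\<bar>\<Sum>k=0..n. q ^ k * ((-1) ^ k * ((-1) ^ n * fact k * real (Stirling n k) / fact n))\<bar> \<le> 6"
proof -
  define Uc :: "complex fps" where "Uc = 1 - fps_exp (-1)"
  define F :: "complex fps" where "F = inverse (1 - fps_const (complex_of_real q) * Uc)"
  define f where "f = (\<lambda>z. inverse (1 - complex_of_real q * (1 - exp (- z))))"
  have U0: "fps_nth Uc 0 = 0" unfolding Uc_def by simp
  have fexp: "f has_fps_expansion F"
    unfolding f_def F_def Uc_def
    by (intro fps_expansion_intros) simp
  have "inverse ((1 - fps_const (complex_of_real q) * fps_X) ^ 1) = Abs_fps (\<lambda>k. of_nat ((1 + k - 1) choose k) * complex_of_real q ^ k)"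
    by (rule one_minus_const_fps_X_neg_power') simp
  hence inv: "inverse (1 - fps_const (complex_of_real q) * fps_X) = Abs_fps (\<lambda>k. complex_of_real q ^ k)" by simp
  have "F = inverse (1 - fps_const (complex_of_real q) * fps_X) oo Uc"
  proof -
    have "(1 - fps_const (complex_of_real q) * fps_X) oo Uc = 1 - fps_const (complex_of_real q) * Uc"
      using U0 by (simp add: fps_compose_sub_distrib fps_compose_mult_distrib)
    thus ?thesis unfolding F_def by (subst fps_inverse_compose[OF U0]) simp_all
  qed
  hence Fn: "fps_nth F n = (\<Sum>k=0..n. complex_of_real q ^ k * fps_nth (Uc ^ k) n)"
    by (simp add: inv fps_compose_nth)
  also have "\<dots> = complex_of_real (\<Sum>k=0..n. q ^ k * ((-1) ^ k * ((-1) ^ n * fact k * real (Stirling n k) / fact n)))"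
    unfolding of_real_sum
  proof (intro sum.cong refl)
    fix k
    have "Uc ^ k = fps_const ((-1) ^ k) * (fps_exp (-1) - 1) ^ k"
      unfolding Uc_def neg_pow_fps_gen[symmetric] by simp
    hence "fps_nth (Uc ^ k) n = (-1) ^ k * ((-1) ^ n * fact k * of_nat (Stirling n k) / fact n)"
      by (simp add: Wpow_nth)
    thus "complex_of_real q ^ k * fps_nth (Uc ^ k) n
        = complex_of_real (q ^ k * ((-1) ^ k * ((-1) ^ n * fact k * real (Stirling n k) / fact n)))"
      by simp
  qed
  finally have FR: "fps_nth F n = complex_of_real (\<Sum>k=0..n. q ^ k * ((-1) ^ k * ((-1) ^ n * fact k * real (Stirling n k) / fact n)))" .
  have den: "1 - complex_of_real q * (1 - exp (- z)) \<noteq> 0" if "norm z \<le> 1" for z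
  proof
    assume "1 - complex_of_real q * (1 - exp (- z)) = 0"
    with den_lower[OF q that] show False by simp
  qed
  have hol: "f holomorphic_on ball 0 1"
    unfolding f_def using den by (intro holomorphic_intros) auto
  have cont: "continuous_on (cball 0 1) f"
    unfolding f_def using den by (intro continuous_intros) auto
  have bnd: "norm (f z) \<le> 6" if "norm (0 - z) = 1" for z
  proof -
    have nz: "norm z \<le> 1" using that by simp
    have "1/6 \<le> Re (1 - complex_of_real q * (1 - exp (- z)))" by (rule den_lower[OF q nz])
    also have "\<dots> \<le> norm (1 - complex_of_real q * (1 - exp (- z)))" by (rule complex_Re_le_cmod)
    finally have "norm (1 - complex_of_real q * (1 - exp (- z))) \<ge> 1/6" .
    hence "inverse (norm (1 - complex_of_real q * (1 - exp (- z)))) \<le> inverse (1/6)"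
      by (intro le_imp_inverse_le) auto
    thus ?thesis unfolding f_def norm_inverse by simp
  qed
  have "norm ((deriv ^^ n) f 0) \<le> fact n * 6 / 1 ^ n"
    by (rule Cauchy_inequality[OF hol cont]) (use bnd in auto)
  moreover have "fps_nth F n = (deriv ^^ n) f 0 / fact n" by (rule fps_nth_fps_expansion[OF fexp])
  moreover have fp: "(fact n :: real) > 0" by simp
  ultimately have "norm (fps_nth F n) \<le> 6"
    by (simp add: norm_divide pos_divide_le_eq mult.commute)
  thus ?thesis unfolding FR norm_of_real .
qed

lemma oddfact_binom: "real (oddfact k) = real (2*k choose k) * fact k / 2 ^ k"
proof -
  have o: "oddfact k * 2 ^ k * fact k = fact (2*k)"
  proof (induction k)
    case 0 thus ?case by (simp add: oddfact_def)
  next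
    case (Suc k)
    have "oddfact (Suc k) = oddfact k * (2*k+1)" by (simp add: oddfact_def)
    hence "oddfact (Suc k) * 2 ^ Suc k * fact (Suc k) = (oddfact k * 2 ^ k * fact k) * ((2*k+1) * (2*k+2))"
      by (simp add: algebra_simps)
    also have "\<dots> = fact (2*k) * ((2*k+1) * (2*k+2))" using Suc.IH by simp
    also have "\<dots> = fact (Suc (Suc (2*k)))" by (simp add: algebra_simps)
    finally show ?case by simp
  qed
  have b: "fact k * fact k * (2*k choose k) = fact (2*k)"
    using binomial_fact_lemma[of k "2*k"] by simp
  have "real (oddfact k) * 2 ^ k * fact k = real (2*k choose k) * fact k * fact k"
    using o b by (metis (mono_tags, lifting) of_nat_fact of_nat_mult of_nat_numeral of_nat_power mult.commute mult.left_commute)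
  thus ?thesis by (simp add: field_simps)
qed

lemma P_eq: "pi * b_seq n - c_seq n =
   (\<Sum>k=0..n. ((-1) ^ k * ((-1) ^ n * fact k * real (Stirling n k) / fact n)) * ((real (2*k choose k) * pi / 4 + Apap k) / 2 ^ k))"
proof -
  have c: "c_seq n = ((-1) ^ (n + 1) / fact n) * (\<Sum>k=0..n. (-1) ^ k * real (Stirling n k) * (fact k / 2 ^ k) * Apap k)"
    unfolding c_seq_def Apap_def[symmetric] by (simp add: sum.atLeast_Suc_atMost[of 0 n] Apap_def)
  show ?thesis
    unfolding c b_seq_def sum_distrib_left sum_subtractf[symmetric]
    by (intro sum.cong refl) (simp add: oddfact_binom field_simps)
qed

lemma P_bound: "\<bar>pi * b_seq n - c_seq n\<bar> \<le> 6 * (pi / 4)"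
proof -
  define w where "w k = (-1) ^ k * ((-1) ^ n * fact k * real (Stirling n k) / fact n)" for k
  have int: "((\<lambda>t. \<Sum>k=0..n. (2 * cos t ^ 2) ^ k * w k) has_integral (pi * b_seq n - c_seq n)) {pi/4..pi/2}"
    unfolding P_eq w_def[symmetric]
  proof (intro has_integral_sum)
    fix k
    have int1: "((\<lambda>t. (2 * cos t) ^ (2*k) * (w k / 2 ^ k)) has_integral ((real (2*k choose k) * pi / 4 + Apap k) * (w k / 2 ^ k))) {pi/4..pi/2}"
      by (rule has_integral_mult_left[OF J_int])
    have eqt: "(2 * cos t) ^ (2*k) * (w k / 2 ^ k) = (2 * cos t ^ 2) ^ k * w k" for t
    proof -
      have "(2 * cos t) ^ (2*k) = ((2 * cos t) ^ 2) ^ k" by (simp add: power_mult)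
      also have "(2 * cos t) ^ 2 = 2 * (2 * cos t ^ 2)" by (simp add: power2_eq_square)
      also have "(2 * (2 * cos t ^ 2)) ^ k = 2 ^ k * (2 * cos t ^ 2) ^ k" by (rule power_mult_distrib)
      finally show ?thesis by simp
    qed
    have eqf: "(\<lambda>t. (2 * cos t) ^ (2*k) * (w k / 2 ^ k)) = (\<lambda>t. (2 * cos t ^ 2) ^ k * w k)"
      by (intro ext eqt)
    have eqv: "(real (2*k choose k) * pi / 4 + Apap k) * (w k / 2 ^ k) = w k * ((real (2*k choose k) * pi / 4 + Apap k) / 2 ^ k)"
      by simp
    show "((\<lambda>t. (2 * cos t ^ 2) ^ k * w k) has_integral w k * ((real (2*k choose k) * pi / 4 + Apap k) / 2 ^ k)) {pi/4..pi/2}"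
      using int1 unfolding eqf eqv .
  qed simp
  have bnd: "norm (\<Sum>k=0..n. (2 * cos x ^ 2) ^ k * w k) \<le> 6" if x: "x \<in> {pi/4..pi/2} - {}" for x
  proof -
    have c0: "cos x \<ge> 0" using x by (intro cos_ge_zero) auto
    have "cos x \<le> cos (pi/4)" using x by (intro cos_monotone_0_pi_le) auto
    hence c1: "cos x \<le> sqrt 2 / 2" by (simp add: cos_45)
    have "cos x ^ 2 \<le> (sqrt 2 / 2) ^ 2" using c0 c1 by (intro power_mono) auto
    hence q1: "2 * cos x ^ 2 \<le> 1" by (simp add: power_divide)
    have q0: "0 \<le> 2 * cos x ^ 2" by simp
    show "norm (\<Sum>k=0..n. (2 * cos x ^ 2) ^ k * w k) \<le> 6"
      unfolding w_def real_norm_def by (rule E_bound[OF q0 q1])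
  qed
  have "norm (pi * b_seq n - c_seq n) \<le> 6 * (pi/2 - pi/4)"
    using has_integral_bound_real[where S="{}", OF _ _ int bnd] by simp
  thus ?thesis by simp
qed

theorem theorem6p3:
  shows "filterlim b_seq at_top sequentially \<and>
         (\<lambda>n. c_seq n / b_seq n) \<longlonglongrightarrow> pi \<and>
         filterlim c_seq at_top sequentially"
proof (intro conjI)
  show b: "filterlim b_seq at_top sequentially" by (rule b_tendsto)
  define P where "P n = pi * b_seq n - c_seq n" for n
  have Pb: "\<bar>P n\<bar> \<le> 6" for n
    using P_bound[of n] pi_less_4 unfolding P_def by linarith
  have c: "c_seq n = pi * b_seq n - P n" for n unfolding P_def by simp
  have "((\<lambda>n. P n / b_seq n) \<longlongrightarrow> 0) sequentially"
  proof (rule Lim_null_comparison[where g = "\<lambda>n. 6 / b_seq n"])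
    have "eventually (\<lambda>n. b_seq n \<ge> 1) sequentially"
      using b by (simp add: filterlim_at_top)
    thus "eventually (\<lambda>n. norm (P n / b_seq n) \<le> 6 / b_seq n) sequentially"
      by eventually_elim (use Pb in \<open>auto simp: abs_divide intro!: divide_right_mono\<close>)
    show "(\<lambda>n. 6 / b_seq n) \<longlonglongrightarrow> 0"
      by (rule tendsto_divide_0[OF tendsto_const]) (use b in \<open>rule filterlim_at_top_imp_at_infinity\<close>)
  qed
  hence "(\<lambda>n. pi - P n / b_seq n) \<longlonglongrightarrow> pi - 0" by (intro tendsto_intros)
  moreover have "eventually (\<lambda>n. pi - P n / b_seq n = c_seq n / b_seq n) sequentially"
  proof -
    have "eventually (\<lambda>n. b_seq n \<ge> 1) sequentially"
      using b by (simp add: filterlim_at_top)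
    thus ?thesis by eventually_elim (simp add: c field_simps)
  qed
  ultimately show "(\<lambda>n. c_seq n / b_seq n) \<longlonglongrightarrow> pi"
    by (simp add: tendsto_cong)
  show "filterlim c_seq at_top sequentially"
  proof (rule filterlim_at_top_mono[where f = "\<lambda>n. pi * b_seq n - 6"])
    show "filterlim (\<lambda>n. pi * b_seq n - 6) at_top sequentially"
    proof -
      have "filterlim (\<lambda>n. pi * b_seq n) at_top sequentially"
        by (rule filterlim_tendsto_pos_mult_at_top[OF tendsto_const _ b]) simp
      hence "filterlim (\<lambda>n. (-6) + pi * b_seq n) at_top sequentially"
        by (rule filterlim_tendsto_add_at_top[OF tendsto_const])
      thus ?thesis by simp
    qed
    show "eventually (\<lambda>n. pi * b_seq n - 6 \<le> c_seq n) sequentially"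
      using Pb by (auto simp: c abs_le_iff)
  qed
qed

end
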